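(* Let $\mathcal{M},\mathcal{L}\in\mathbb{C}^{2n\times 2n}$ with $(\mathcal{M},\mathcal{L})$ regular, let $(R_1,T_1)$ and $(R_2,T_2)$ be regular pairs with $R_i,T_i\in\mathbb{C}^{r_i\times r_i}$, and let $U_1\in\mathbb{C}^{2n\times r_1}$, $U_2\in\mathbb{C}^{2n\times r_2}$ have full column rank and satisfy $\mathcal{M}U_1T_1=\mathcal{L}U_1R_1$ and $\mathcal{M}U_2T_2=\mathcal{L}U_2R_2$. (i) If $(\mathcal{M},\mathcal{L})$ is a Hamiltonian pair and $\sigma(R_1,T_1)\cap\sigma(-R_2^H,T_2^H)=\emptyset$, then $U_1$ and $U_2$ are $\mathcal{J}$-orthogonal, i.e. $U_2^H\mathcal{J}U_1=0$. (ii) If $(\mathcal{M},\mathcal{L})$ is a symplectic pair and $\sigma(R_1,T_1)\cap\sigma(T_2^H,R_2^H)=\emptyset$, then $U_2^H\mathcal{J}U_1=0$.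
   Context: $\mathcal{J}=\mathcal{J}_n=\begin{bmatrix}0&I_n\\-I_n&0\end{bmatrix}$. A pair $(\mathcal{M},\mathcal{L})$ of $2n\times2n$ matrices is a Hamiltonian pair if $\mathcal{M}\mathcal{J}\mathcal{L}^H=-\mathcal{L}\mathcal{J}\mathcal{M}^H$, and a symplectic pair if $\mathcal{M}\mathcal{J}\mathcal{M}^H=\mathcal{L}\mathcal{J}\mathcal{L}^H$. A pair $(A,B)$ of square matrices is regular if $\det(A-\lambda B)\neq0$ for some $\lambda\in\mathbb{C}$; its spectrum $\sigma(A,B)$ is the set of $\lambda\in\mathbb{C}$ with $\det(A-\lambda B)=0$, together with $\infty$ if $B$ is singular. *)

theory Defs
  imports "Jordan_Normal_Form.Schur_Decomposition" "Jordan_Normal_Form.DL_Rank"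
begin

definition Jmat :: "nat \<Rightarrow> complex mat" where
  "Jmat n = four_block_mat (0\<^sub>m n n) (1\<^sub>m n) (- 1\<^sub>m n) (0\<^sub>m n n)"

definition hamiltonian_pair :: "nat \<Rightarrow> complex mat \<Rightarrow> complex mat \<Rightarrow> bool" where
  "hamiltonian_pair n M L \<longleftrightarrow>
     M * Jmat n * mat_adjoint L = - (L * Jmat n * mat_adjoint M)"

definition symplectic_pair :: "nat \<Rightarrow> complex mat \<Rightarrow> complex mat \<Rightarrow> bool" where
  "symplectic_pair n M L \<longleftrightarrow>
     M * Jmat n * mat_adjoint M = L * Jmat n * mat_adjoint L"

definition regular_pair :: "complex mat \<Rightarrow> complex mat \<Rightarrow> bool" where
  "regular_pair A B \<longleftrightarrow> (\<exists>z::complex. det (A - z \<cdot>\<^sub>m B) \<noteq> 0)"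

(* Spectrum of a pair, as a subset of the extended complex plane:
   Some \<lambda> for finite eigenvalues, None represents \<infinity>. *)
definition pair_spectrum :: "complex mat \<Rightarrow> complex mat \<Rightarrow> complex option set" where
  "pair_spectrum A B =
     {Some z | z. det (A - z \<cdot>\<^sub>m B) = 0} \<union> (if det B = 0 then {None} else {})"

definition full_column_rank :: "complex mat \<Rightarrow> bool" where
  "full_column_rank U \<longleftrightarrow> vec_space.rank (dim_row U) U = dim_col U"

end

theory Submission
  imports Defs
begin


lemma adj_dim[simp]: fixes A :: "complex mat" shows "dim_row (mat_adjoint A) = dim_col A" "dim_col (mat_adjoint A) = dim_row A"
  unfolding mat_adjoint_def by auto

lemma adj_index[simp]: fixes A :: "complex mat" shows "i < dim_col A \<Longrightarrow> j < dim_row A \<Longrightarrow> mat_adjoint A $$ (i,j) = cnj (A $$ (j,i))"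
  unfolding mat_adjoint_def by (simp add: mat_of_rows_index)

lemma adj_carrier[simp]: fixes A :: "complex mat" shows "A \<in> carrier_mat m n \<Longrightarrow> mat_adjoint A \<in> carrier_mat n m"
  unfolding carrier_mat_def by auto

lemma adj_mult: fixes A :: "complex mat" assumes "A \<in> carrier_mat m k" "B \<in> carrier_mat k n"
  shows "mat_adjoint (A * B) = mat_adjoint B * mat_adjoint A"
  by (rule eq_matI, insert assms, auto simp: scalar_prod_def intro!: sum.cong)

lemma adj_adj[simp]: fixes A :: "complex mat" shows "mat_adjoint (mat_adjoint A) = A"
  by (rule eq_matI, auto)

lemma adj_add: fixes A :: "complex mat" assumes "A \<in> carrier_mat m n" "B \<in> carrier_mat m n"
  shows "mat_adjoint (A + B) = mat_adjoint A + mat_adjoint B"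
  by (rule eq_matI, insert assms, auto)

lemma adj_minus: fixes A :: "complex mat" assumes "A \<in> carrier_mat m n" "B \<in> carrier_mat m n"
  shows "mat_adjoint (A - B) = mat_adjoint A - mat_adjoint B"
  by (rule eq_matI, insert assms, auto)

lemma adj_uminus: fixes A :: "complex mat" shows "mat_adjoint (- A) = - mat_adjoint A"
  by (rule eq_matI, auto)

lemma adj_smult: fixes A :: "complex mat" shows "mat_adjoint (c \<cdot>\<^sub>m A) = cnj c \<cdot>\<^sub>m mat_adjoint A"
  by (rule eq_matI, auto)

lemma adj_one[simp]: "mat_adjoint (1\<^sub>m n :: complex mat) = 1\<^sub>m n"
  by (rule eq_matI, auto)

lemma adj_zero[simp]: "mat_adjoint (0\<^sub>m m n :: complex mat) = 0\<^sub>m n m"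
  by (rule eq_matI, auto)

interpretation cnj_hom: comm_ring_hom cnj
  by unfold_locales auto

lemma adj_det: fixes A :: "complex mat" assumes "A \<in> carrier_mat n n" shows "det (mat_adjoint A) = cnj (det A)"
proof -
  have "mat_adjoint A = transpose_mat (map_mat cnj A)"
    by (rule eq_matI, insert assms, auto)
  thus ?thesis using assms by (simp add: det_transpose)
qed



lemma pencil_roots_finite:
  fixes A B :: "complex mat"
  assumes A: "A \<in> carrier_mat n n" and B: "B \<in> carrier_mat n n" and reg: "regular_pair A B"
  shows "finite {z. det (A - z \<cdot>\<^sub>m B) = 0}"
proof -
  define P where "P = mat n n (\<lambda>(i,j). [:A$$(i,j), - B$$(i,j):])"
  have P: "P \<in> carrier_mat n n" unfolding P_def by auto
  have ev: "poly (det P) z = det (A - z \<cdot>\<^sub>m B)" for z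
    by (rule poly_det_cong[of _ n], insert A B, auto simp: P_def)
  from reg obtain z0 where "det (A - z0 \<cdot>\<^sub>m B) \<noteq> 0" unfolding regular_pair_def by auto
  hence "det P \<noteq> 0" using ev[of z0] by auto
  from poly_roots_finite[OF this] show ?thesis unfolding ev .
qed

lemma avoid_finite:
  fixes f :: "nat \<Rightarrow> 'a"
  assumes "finite F" "inj f"
  shows "\<exists>m. f m \<notin> F"
proof (rule ccontr)
  assume "\<not> ?thesis"
  hence "range f \<subseteq> F" by auto
  hence "finite (range f)" using assms(1) finite_subset by auto
  hence "finite (UNIV :: nat set)" using assms(2) finite_imageD by blast
  thus False by simp
qed

lemma inj_imag: "inj (\<lambda>m::nat. \<i> * of_nat m)"
  by (rule injI) (simp add: complex_eq_iff)

definition ucirc :: "nat \<Rightarrow> complex" where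
  "ucirc m = (1 + \<i> * of_nat m) / (1 - \<i> * of_nat m)"

lemma ucirc_nz: "1 - \<i> * of_nat m \<noteq> 0" "1 + \<i> * of_nat m \<noteq> 0"
  by (simp_all add: complex_eq_iff)

lemma inj_ucirc: "inj ucirc"
proof (rule injI)
  fix x y assume "ucirc x = ucirc y"
  hence "(1 + \<i> * of_nat x) * (1 - \<i> * of_nat y) = (1 + \<i> * of_nat y) * (1 - \<i> * of_nat x)"
    unfolding ucirc_def using ucirc_nz by (simp add: field_simps)
  thus "x = y" by (simp add: complex_eq_iff algebra_simps)
qed

lemma ucirc_norm: "cnj (ucirc m) * ucirc m = 1"
proof -
  have "cnj (ucirc m) = (1 - \<i> * of_nat m) / (1 + \<i> * of_nat m)"
    unfolding ucirc_def by simp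
  have h: "1 + complex_of_nat m * complex_of_nat m \<noteq> 0"
  proof -
    have "1 + complex_of_nat m * complex_of_nat m = of_nat (1 + m * m)" by simp
    also have "\<dots> \<noteq> 0" by (simp only: of_nat_eq_0_iff)
    finally show ?thesis .
  qed
  show ?thesis unfolding ucirc_def using ucirc_nz h by (simp add: field_simps)
qed



lemma massoc: "dim_col A = dim_row B \<Longrightarrow> dim_col B = dim_row C \<Longrightarrow> A * B * C = A * (B * C)"
  by (rule assoc_mult_mat[of A "dim_row A" "dim_col A" B "dim_col B" C "dim_col C"]) auto

lemma mdist_minus_r: fixes A :: "'a :: ring mat" shows
  "dim_col A = dim_row B \<Longrightarrow> dim_row B = dim_row C \<Longrightarrow> dim_col B = dim_col C \<Longrightarrow> A * (B - C) = A * B - A * C"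
  by (rule mult_minus_distrib_mat[of A "dim_row A" "dim_col A" B "dim_col B"]) auto

lemma mdist_minus_l: fixes A :: "'a :: ring mat" shows
  "dim_row A = dim_row B \<Longrightarrow> dim_col A = dim_col B \<Longrightarrow> dim_col A = dim_row C \<Longrightarrow> (A - B) * C = A * C - B * C"
  by (rule minus_mult_distrib_mat[of A "dim_row A" "dim_col A" B C "dim_col C"]) auto

lemma mdist_plus_r: fixes A :: "'a :: semiring_0 mat" shows
  "dim_col A = dim_row B \<Longrightarrow> dim_row B = dim_row C \<Longrightarrow> dim_col B = dim_col C \<Longrightarrow> A * (B + C) = A * B + A * C"
  by (rule mult_add_distrib_mat[of A "dim_row A" "dim_col A" B "dim_col B"]) auto

lemma mdist_plus_l: fixes A :: "'a :: semiring_0 mat" shows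
  "dim_row A = dim_row B \<Longrightarrow> dim_col A = dim_col B \<Longrightarrow> dim_col A = dim_row C \<Longrightarrow> (A + B) * C = A * C + B * C"
  by (rule add_mult_distrib_mat[of A "dim_row A" "dim_col A" B C "dim_col C"]) auto

lemma msmult_r: fixes A :: "'a :: comm_semiring_0 mat" shows
  "dim_col A = dim_row B \<Longrightarrow> A * (k \<cdot>\<^sub>m B) = k \<cdot>\<^sub>m (A * B)"
  by (rule mult_smult_distrib[of A "dim_row A" "dim_col A" B "dim_col B"]) auto

lemma msmult_l: fixes A :: "'a :: comm_semiring_0 mat" shows
  "dim_col A = dim_row B \<Longrightarrow> (k \<cdot>\<^sub>m A) * B = k \<cdot>\<^sub>m (A * B)"
  by (rule mult_smult_assoc_mat[of A "dim_row A" "dim_col A" B "dim_col B"]) auto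

lemmas malg = massoc mdist_minus_r mdist_minus_l mdist_plus_r mdist_plus_l msmult_r msmult_l

lemma smult_one_mat_vec: assumes "(y :: 'a :: comm_ring_1 vec) \<in> carrier_vec n"
  shows "(c \<cdot>\<^sub>m 1\<^sub>m n) *\<^sub>v y = c \<cdot>\<^sub>v y"
proof -
  show ?thesis
    apply (rule eq_vecI, insert assms, auto simp: scalar_prod_def)
    apply (subst sum.cong[OF refl, of _ _ "\<lambda>ia. if ia = _ then c * y $ _ else 0"])
    apply auto
    done
qed

lemma inv_ex:
  fixes A :: "complex mat"
  assumes A: "A \<in> carrier_mat n n" and d: "det A \<noteq> 0"
  shows "\<exists>B \<in> carrier_mat n n. A * B = 1\<^sub>m n \<and> B * A = 1\<^sub>m n"
proof -
  from det_non_zero_imp_unit[OF A d, of "()"]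
  have "A \<in> Units (ring_mat TYPE(complex) n ())" .
  thus ?thesis unfolding Units_def ring_mat_simps by auto
qed

lemma det_shift_similar:
  fixes Q B S Si :: "complex mat"
  assumes Q: "Q \<in> carrier_mat b b" and B: "B \<in> carrier_mat b b" and S: "S \<in> carrier_mat b b"
    and Si: "Si \<in> carrier_mat b b" and SSi: "S * Si = 1\<^sub>m b" and QB: "Q = S * B * Si"
  shows "det (Q - c \<cdot>\<^sub>m 1\<^sub>m b) = det S * det (B - c \<cdot>\<^sub>m 1\<^sub>m b) * det Si"
proof -
  have "S * (B - c \<cdot>\<^sub>m 1\<^sub>m b) * Si = S * B * Si - c \<cdot>\<^sub>m (S * Si)"
    using S B Si by (simp add: malg)
  hence "Q - c \<cdot>\<^sub>m 1\<^sub>m b = S * (B - c \<cdot>\<^sub>m 1\<^sub>m b) * Si" using QB SSi by simp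
  moreover have Bc: "B - c \<cdot>\<^sub>m 1\<^sub>m b \<in> carrier_mat b b" using B by auto
  ultimately show ?thesis using det_mult[OF mult_carrier_mat[OF S Bc] Si] det_mult[OF S Bc] by simp
qed

lemma sylvester0:
  fixes P Q X :: "complex mat"
  assumes P: "P \<in> carrier_mat a a" and Q: "Q \<in> carrier_mat b b" and X: "X \<in> carrier_mat a b"
    and eq: "P * X = X * Q"
    and no: "\<And>\<mu>. det (P - \<mu> \<cdot>\<^sub>m 1\<^sub>m a) = 0 \<Longrightarrow> det (Q - \<mu> \<cdot>\<^sub>m 1\<^sub>m b) = 0 \<Longrightarrow> False"
  shows "X = 0\<^sub>m a b"
proof -
  obtain es where cp: "char_poly Q = (\<Prod> e \<leftarrow> es. [:- e, 1:])"
    using char_poly_factorized[OF Q] by auto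
  define B where "B = schur_upper_triangular Q es"
  note sch = schur_upper_triangular[OF Q cp, folded B_def]
  have B: "B \<in> carrier_mat b b" and ut: "upper_triangular B" using sch by auto
  from sch(3) obtain S Si where w: "similar_mat_wit Q B S Si" unfolding similar_mat_def by auto
  hence S: "S \<in> carrier_mat b b" and Si: "Si \<in> carrier_mat b b" and SSi: "S * Si = 1\<^sub>m b"
    and SiS: "Si * S = 1\<^sub>m b" and QB: "Q = S * B * Si"
    using Q unfolding similar_mat_wit_def Let_def by auto
  define Y where "Y = X * S"
  have Y: "Y \<in> carrier_mat a b" unfolding Y_def using X S by auto
  have PY: "P * Y = Y * B"
  proof -
    have "P * Y = X * Q * S" unfolding Y_def using P X S eq by (simp add: assoc_mult_mat[symmetric, of P a a X b S b])
    also have "\<dots> = X * S * B * (Si * S)" unfolding QB using X S B Si by (simp add: massoc)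
    also have "\<dots> = Y * B" unfolding SiS Y_def using X S B by simp
    finally show ?thesis .
  qed
  have diag: "det (Q - B $$ (j,j) \<cdot>\<^sub>m 1\<^sub>m b) = 0" if j: "j < b" for j
  proof -
    let ?c = "B $$ (j,j)"
    have ut2: "upper_triangular (B - ?c \<cdot>\<^sub>m 1\<^sub>m b)" using ut B by (auto simp: upper_triangular_def)
    have "det (B - ?c \<cdot>\<^sub>m 1\<^sub>m b) = prod_list (diag_mat (B - ?c \<cdot>\<^sub>m 1\<^sub>m b))"
      by (rule det_upper_triangular[OF ut2], insert B, auto)
    also have "\<dots> = 0" unfolding prod_list_diag_prod using j B
      by (intro prod_zero) (auto intro!: bexI[of _ j])
    finally show ?thesis unfolding det_shift_similar[OF Q B S Si SSi QB] by simp
  qed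
  have colz: "\<forall>i<a. Y $$ (i,j) = 0" if "j < b" for j
    using that
  proof (induction j rule: less_induct)
    case (less j)
    let ?c = "B $$ (j,j)"
    define y where "y = col Y j"
    have y: "y \<in> carrier_vec a" unfolding y_def using Y by auto
    have "P *\<^sub>v y = col (P * Y) j" unfolding y_def by (rule col_mult2[symmetric, OF P Y less.prems])
    also have "\<dots> = col (Y * B) j" unfolding PY ..
    also have "\<dots> = ?c \<cdot>\<^sub>v y"
    proof (rule eq_vecI)
      fix i assume i: "i < dim_vec (?c \<cdot>\<^sub>v y)"
      hence i: "i < a" using y by auto
      have "col (Y * B) j $ i = (\<Sum>k = 0..<b. Y $$ (i,k) * B $$ (k,j))"
        using Y B i less by (simp add: scalar_prod_def)
      also have "\<dots> = (\<Sum>k = 0..<b. if k = j then Y $$ (i,j) * ?c else 0)"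
      proof (rule sum.cong[OF refl])
        fix k assume k: "k \<in> {0..<b}"
        show "Y $$ (i,k) * B $$ (k,j) = (if k = j then Y $$ (i,j) * ?c else 0)"
        proof (cases "k < j")
          case True thus ?thesis using less.IH[of k] less.prems i by auto
        next
          case False
          show ?thesis
          proof (cases "k = j")
            case False with \<open>\<not> k < j\<close> have "j < k" by auto
            hence "B $$ (k,j) = 0" using ut B k by auto
            thus ?thesis using False by auto
          qed auto
        qed
      qed
      also have "\<dots> = Y $$ (i,j) * ?c" using less.prems by simp
      finally show "col (Y * B) j $ i = (?c \<cdot>\<^sub>v y) $ i" unfolding y_def using i Y less.prems by simp
    qed (insert y Y B less.prems, auto simp: y_def)
    finally have Py: "P *\<^sub>v y = ?c \<cdot>\<^sub>v y" .
    have "(P - ?c \<cdot>\<^sub>m 1\<^sub>m a) *\<^sub>v y = P *\<^sub>v y - ?c \<cdot>\<^sub>v y"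
      using P y by (simp add: minus_mult_distrib_mat_vec[of _ a a] smult_one_mat_vec)
    also have "\<dots> = 0\<^sub>v a" unfolding Py using y by simp
    finally have z: "(P - ?c \<cdot>\<^sub>m 1\<^sub>m a) *\<^sub>v y = 0\<^sub>v a" .
    have "y = 0\<^sub>v a"
    proof (rule ccontr)
      assume "y \<noteq> 0\<^sub>v a"
      moreover have Pc: "P - ?c \<cdot>\<^sub>m 1\<^sub>m a \<in> carrier_mat a a" using P by auto
      ultimately have "det (P - ?c \<cdot>\<^sub>m 1\<^sub>m a) = 0"
        using det_0_iff_vec_prod_zero_field[OF Pc] y z by auto
      thus False using no diag[OF less.prems] by blast
    qed
    thus ?case unfolding y_def using Y less.prems
      by (metis carrier_matD(1) carrier_matD(2) index_col index_zero_vec(1))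
  qed
  have "Y = 0\<^sub>m a b" by (rule eq_matI, insert Y colz, auto)
  hence "X * S * Si = 0\<^sub>m a b" unfolding Y_def using X S Si by simp
  hence "X * (S * Si) = 0\<^sub>m a b" using X S Si by (simp add: massoc)
  thus ?thesis unfolding SSi using X Si by simp
qed



lemma pencil_shift:
  fixes G H :: "complex mat"
  assumes G: "G \<in> carrier_mat s s" and H: "H \<in> carrier_mat s s" and mu: "\<mu> \<noteq> 0"
  shows "det (H - \<mu> \<cdot>\<^sub>m (G - z \<cdot>\<^sub>m H)) = (- \<mu>) ^ s * det (G - (z + 1 / \<mu>) \<cdot>\<^sub>m H)"
proof -
  have "H - \<mu> \<cdot>\<^sub>m (G - z \<cdot>\<^sub>m H) = (- \<mu>) \<cdot>\<^sub>m (G - (z + 1 / \<mu>) \<cdot>\<^sub>m H)"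
    by (rule eq_matI, insert G H mu, auto simp: field_simps)
  thus ?thesis using G H by simp
qed

lemma inj_cnat: "inj (of_nat :: nat \<Rightarrow> complex)" by (rule injI) simp

lemma inv_det_nz:
  fixes A B :: "complex mat"
  assumes "A \<in> carrier_mat n n" "B \<in> carrier_mat n n" "A * B = 1\<^sub>m n"
  shows "det A \<noteq> 0"
  using det_mult[OF assms(1,2)] assms(3) by auto

lemma gsylvester:
  fixes G H R T X :: "complex mat"
  assumes G: "G \<in> carrier_mat s s" and H: "H \<in> carrier_mat s s"
    and R: "R \<in> carrier_mat r r" and T: "T \<in> carrier_mat r r" and X: "X \<in> carrier_mat s r"
    and regGH: "regular_pair G H" and regRT: "regular_pair R T"
    and eq: "G * X * T = H * X * R"
    and disj: "pair_spectrum R T \<inter> pair_spectrum G H = {}"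
  shows "X = 0\<^sub>m s r"
proof -
  let ?F = "{z. det (G - z \<cdot>\<^sub>m H) = 0} \<union> {z. det (R - z \<cdot>\<^sub>m T) = 0}"
  have fin: "finite ?F" using pencil_roots_finite[OF G H regGH] pencil_roots_finite[OF R T regRT] by auto
  obtain m where "(of_nat m :: complex) \<notin> ?F" using avoid_finite[OF fin, of "of_nat :: nat \<Rightarrow> complex"] inj_cnat by auto
  then obtain z :: complex where dG: "det (G - z \<cdot>\<^sub>m H) \<noteq> 0" and dR: "det (R - z \<cdot>\<^sub>m T) \<noteq> 0" by auto
  define Gz where "Gz = G - z \<cdot>\<^sub>m H"
  define Sz where "Sz = R - z \<cdot>\<^sub>m T"
  have Gz: "Gz \<in> carrier_mat s s" and Sz: "Sz \<in> carrier_mat r r" unfolding Gz_def Sz_def using G H R T by auto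
  obtain Gi where Gi: "Gi \<in> carrier_mat s s" and GiG: "Gi * Gz = 1\<^sub>m s" and GGi: "Gz * Gi = 1\<^sub>m s"
    using inv_ex[OF Gz dG[folded Gz_def]] by auto
  obtain Si where Si: "Si \<in> carrier_mat r r" and SiS: "Si * Sz = 1\<^sub>m r" and SSi: "Sz * Si = 1\<^sub>m r"
    using inv_ex[OF Sz dR[folded Sz_def]] by auto
  have key: "Gz * X * T = H * X * Sz"
  proof -
    have "Gz * X * T = G * X * T - z \<cdot>\<^sub>m (H * X * T)" unfolding Gz_def using G H X T by (simp add: malg)
    also have "\<dots> = H * X * R - z \<cdot>\<^sub>m (H * X * T)" unfolding eq ..
    also have "\<dots> = H * X * Sz" unfolding Sz_def using H X R T by (simp add: malg)
    finally show ?thesis .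
  qed
  define P where "P = Gi * H"
  define Q where "Q = T * Si"
  have P: "P \<in> carrier_mat s s" and Q: "Q \<in> carrier_mat r r" unfolding P_def Q_def using Gi H T Si by auto
  have PQ: "P * X = X * Q"
  proof -
    have "X * Q = (Gi * Gz) * X * T * Si" unfolding GiG Q_def using X T Si by (simp add: massoc)
    also have "\<dots> = Gi * (Gz * X * T) * Si" using Gi Gz X T Si by (simp add: massoc)
    also have "\<dots> = Gi * H * X * (Sz * Si)" unfolding key using Gi H X Sz Si by (simp add: massoc)
    also have "\<dots> = P * X" unfolding SSi P_def using Gi H X by simp
    finally show ?thesis by simp
  qed
  have dGi: "det Gi \<noteq> 0" using inv_det_nz[OF Gi Gz GiG] .
  have dSi: "det Si \<noteq> 0" using inv_det_nz[OF Si Sz SiS] .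
  show ?thesis
  proof (rule sylvester0[OF P Q X PQ])
    fix \<mu> assume dP: "det (P - \<mu> \<cdot>\<^sub>m 1\<^sub>m s) = 0" and dQ: "det (Q - \<mu> \<cdot>\<^sub>m 1\<^sub>m r) = 0"
    have "P - \<mu> \<cdot>\<^sub>m 1\<^sub>m s = Gi * (H - \<mu> \<cdot>\<^sub>m Gz)"
      unfolding P_def using Gi H Gz by (simp add: malg GiG)
    moreover have c1: "H - \<mu> \<cdot>\<^sub>m Gz \<in> carrier_mat s s" using H Gz by auto
    ultimately have "det Gi * det (H - \<mu> \<cdot>\<^sub>m Gz) = 0" using dP det_mult[OF Gi c1] by auto
    hence dH: "det (H - \<mu> \<cdot>\<^sub>m Gz) = 0" using dGi by auto
    have "Q - \<mu> \<cdot>\<^sub>m 1\<^sub>m r = (T - \<mu> \<cdot>\<^sub>m Sz) * Si"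
      unfolding Q_def using Si T Sz by (simp add: malg SSi)
    moreover have c2: "T - \<mu> \<cdot>\<^sub>m Sz \<in> carrier_mat r r" using T Sz by auto
    ultimately have "det (T - \<mu> \<cdot>\<^sub>m Sz) * det Si = 0" using dQ det_mult[OF c2 Si] by auto
    hence dT: "det (T - \<mu> \<cdot>\<^sub>m Sz) = 0" using dSi by auto
    show False
    proof (cases "\<mu> = 0")
      case True
      have "H - 0 \<cdot>\<^sub>m Gz = H" by (rule eq_matI, insert H Gz, auto)
      moreover have "T - 0 \<cdot>\<^sub>m Sz = T" by (rule eq_matI, insert T Sz, auto)
      ultimately have "det H = 0" "det T = 0" using dH dT True by auto
      hence "None \<in> pair_spectrum R T \<inter> pair_spectrum G H" unfolding pair_spectrum_def by auto
      thus False using disj by auto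
    next
      case False
      let ?l = "z + 1 / \<mu>"
      have "det (G - ?l \<cdot>\<^sub>m H) = 0" using dH pencil_shift[OF G H False, of z] False unfolding Gz_def by auto
      moreover have "det (R - ?l \<cdot>\<^sub>m T) = 0" using dT pencil_shift[OF R T False, of z] False unfolding Sz_def by auto
      ultimately have "Some ?l \<in> pair_spectrum R T \<inter> pair_spectrum G H" unfolding pair_spectrum_def by auto
      thus False using disj by auto
    qed
  qed
qed



lemma add_minus_cancel_mat: fixes X Y :: "complex mat"
  shows "X \<in> carrier_mat a b \<Longrightarrow> Y \<in> carrier_mat a b \<Longrightarrow> X + Y - Y = X"
  by (rule eq_matI) auto

lemma minus_add_cancel_mat: fixes X Y :: "complex mat"
  shows "X \<in> carrier_mat a b \<Longrightarrow> Y \<in> carrier_mat a b \<Longrightarrow> X - Y + Y = X"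
  by (rule eq_matI) auto

lemma urel:
  fixes A B U T R :: "complex mat"
  assumes A: "A \<in> carrier_mat k k" and B: "B \<in> carrier_mat k k" and U: "U \<in> carrier_mat k r"
    and T: "T \<in> carrier_mat r r" and R: "R \<in> carrier_mat r r"
    and hA: "A = 1\<^sub>m k + z \<cdot>\<^sub>m B" and h: "A * U * T = B * U * R"
  shows "B * U * (R - z \<cdot>\<^sub>m T) = U * T" "A * U * (R - z \<cdot>\<^sub>m T) = U * R"
proof -
  have "A * U * T = U * T + z \<cdot>\<^sub>m (B * U * T)" unfolding hA using B U T by (simp add: malg)
  hence BUR: "B * U * R = U * T + z \<cdot>\<^sub>m (B * U * T)" using h by simp
  have "B * U * (R - z \<cdot>\<^sub>m T) = B * U * R - z \<cdot>\<^sub>m (B * U * T)" using B U T R by (simp add: malg)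
  also have "\<dots> = U * T" unfolding BUR using B U T by (intro add_minus_cancel_mat[of _ k r]) auto
  finally show BUS: "B * U * (R - z \<cdot>\<^sub>m T) = U * T" .
  have e1: "A * U = U + z \<cdot>\<^sub>m (B * U)" unfolding hA using B U by (simp add: malg)
  have "A * U * (R - z \<cdot>\<^sub>m T) = U * (R - z \<cdot>\<^sub>m T) + z \<cdot>\<^sub>m (B * U * (R - z \<cdot>\<^sub>m T))"
    unfolding e1 using mdist_plus_l[of U "z \<cdot>\<^sub>m (B*U)" "R - z \<cdot>\<^sub>m T"] msmult_l[of "B*U" "R - z \<cdot>\<^sub>m T" z] B U T R
    by simp
  also have "\<dots> = U * R - z \<cdot>\<^sub>m (U * T) + z \<cdot>\<^sub>m (U * T)" unfolding BUS using U T R by (simp add: malg)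
  also have "\<dots> = U * R" using U T R by (intro minus_add_cancel_mat[of _ k r]) auto
  finally show "A * U * (R - z \<cdot>\<^sub>m T) = U * R" .
qed

lemma J_carrier[simp]: "Jmat n \<in> carrier_mat (2*n) (2*n)"
proof -
  have "Jmat n \<in> carrier_mat (n+n) (n+n)" unfolding Jmat_def by (rule four_block_carrier_mat) auto
  thus ?thesis by (simp add: mult_2)
qed

lemma JJ: "Jmat n * Jmat n = - 1\<^sub>m (2*n)"
proof -
  have "Jmat n * Jmat n = four_block_mat (- 1\<^sub>m n) (0\<^sub>m n n) (0\<^sub>m n n) (- 1\<^sub>m n)"
    unfolding Jmat_def
    by (subst mult_four_block_mat[OF zero_carrier_mat[of n n] one_carrier_mat[of n] uminus_carrier_mat[OF one_carrier_mat[of n]] zero_carrier_mat[of n n]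
          zero_carrier_mat[of n n] one_carrier_mat[of n] uminus_carrier_mat[OF one_carrier_mat[of n]] zero_carrier_mat[of n n]]) auto
  also have "\<dots> = - 1\<^sub>m (2*n)" by (rule eq_matI) (auto simp: mult_2)
  finally show ?thesis .
qed



lemma ham_col:
  fixes A B J :: "complex mat"
  assumes B: "B \<in> carrier_mat k k" and J: "J \<in> carrier_mat k k" and JJ: "J * J = - 1\<^sub>m k"
    and hA: "A = 1\<^sub>m k + z \<cdot>\<^sub>m B" and cz: "cnj z = - z"
    and hAB: "A * J * mat_adjoint B = - (B * J * mat_adjoint A)"
  shows "mat_adjoint A * J * B + mat_adjoint B * J * A = 0\<^sub>m k k"
proof -
  let ?C = "mat_adjoint B"
  have C: "?C \<in> carrier_mat k k" using B by simp
  have adjA: "mat_adjoint A = 1\<^sub>m k + (- z) \<cdot>\<^sub>m ?C"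
    unfolding hA using B by (subst adj_add[of "1\<^sub>m k" k k]) (auto simp: adj_smult cz)
  have e: "J * ?C + z \<cdot>\<^sub>m (B * (J * ?C)) = - (B * J + (- z) \<cdot>\<^sub>m (B * (J * ?C)))"
    using hAB unfolding adjA unfolding hA using B J C by (simp add: malg)
  have row: "J * ?C + B * J = 0\<^sub>m k k"
  proof (rule eq_matI)
    fix i j assume ij: "i < dim_row (0\<^sub>m k k :: complex mat)" "j < dim_col (0\<^sub>m k k :: complex mat)"
    have "(J * ?C + z \<cdot>\<^sub>m (B * (J * ?C))) $$ (i,j) = (- (B * J + (- z) \<cdot>\<^sub>m (B * (J * ?C)))) $$ (i,j)"
      using e by simp
    thus "(J * ?C + B * J) $$ (i,j) = 0\<^sub>m k k $$ (i,j)" using ij B J C by (simp add: algebra_simps)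
  qed (insert B J C, auto)
  have "J * (J * ?C + B * J) * J = 0\<^sub>m k k" unfolding row using J by simp
  hence "J * J * ?C * J + J * B * (J * J) = 0\<^sub>m k k" using B J C by (simp add: malg)
  hence col: "- (?C * J) + - (J * B) = 0\<^sub>m k k" unfolding JJ using B J C by (simp add: malg)
  show ?thesis
  proof (rule eq_matI)
    fix i j assume ij: "i < dim_row (0\<^sub>m k k :: complex mat)" "j < dim_col (0\<^sub>m k k :: complex mat)"
    have "(- (?C * J) + - (J * B)) $$ (i,j) = 0" using col ij by simp
    thus "(mat_adjoint A * J * B + ?C * J * A) $$ (i,j) = 0\<^sub>m k k $$ (i,j)"
      unfolding adjA unfolding hA using ij B J C by (simp add: malg algebra_simps neg_eq_iff_add_eq_0)
  qed (insert B J C, auto simp: hA)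
qed



lemma symp_col:
  fixes A B J :: "complex mat"
  assumes B: "B \<in> carrier_mat k k" and J: "J \<in> carrier_mat k k" and JJ: "J * J = - 1\<^sub>m k"
    and hA: "A = 1\<^sub>m k + z \<cdot>\<^sub>m B" and cz: "cnj z * z = 1"
    and hAA: "A * J * mat_adjoint A = B * J * mat_adjoint B"
  shows "mat_adjoint A * J * A = mat_adjoint B * J * B"
proof -
  let ?C = "mat_adjoint B"
  have C: "?C \<in> carrier_mat k k" using B by simp
  have cz2: "z * cnj z = 1" using cz by (simp add: mult.commute)
  have cz3: "z * (cnj z * x) = x" "cnj z * (z * x) = x" for x
    by (simp_all add: mult.assoc[symmetric] cz cz2)
  have adjA: "mat_adjoint A = 1\<^sub>m k + (cnj z) \<cdot>\<^sub>m ?C"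
    unfolding hA using B by (subst adj_add[of "1\<^sub>m k" k k]) (auto simp: adj_smult)
  have row: "J + cnj z \<cdot>\<^sub>m (J * ?C) + z \<cdot>\<^sub>m (B * J) = 0\<^sub>m k k"
  proof (rule eq_matI)
    fix i j assume ij: "i < dim_row (0\<^sub>m k k :: complex mat)" "j < dim_col (0\<^sub>m k k :: complex mat)"
    have "(A * J * mat_adjoint A) $$ (i,j) = (B * J * ?C) $$ (i,j)" using hAA by simp
    thus "(J + cnj z \<cdot>\<^sub>m (J * ?C) + z \<cdot>\<^sub>m (B * J)) $$ (i,j) = 0\<^sub>m k k $$ (i,j)"
      unfolding adjA unfolding hA using ij B J C
      by (simp add: malg algebra_simps cz cz2 cz3 neg_eq_iff_add_eq_0)
  qed (insert B J C, auto)
  have "J * (J + cnj z \<cdot>\<^sub>m (J * ?C) + z \<cdot>\<^sub>m (B * J)) * J = 0\<^sub>m k k" unfolding row using J by simp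
  hence "J * J * J + (cnj z \<cdot>\<^sub>m (J * J * ?C * J) + z \<cdot>\<^sub>m (J * B * (J * J))) = 0\<^sub>m k k"
    using B J C by (simp add: malg)
  hence col: "- J + (cnj z \<cdot>\<^sub>m (- (?C * J)) + z \<cdot>\<^sub>m (- (J * B))) = 0\<^sub>m k k"
    unfolding JJ using B J C by (simp add: malg)
  show ?thesis
  proof (rule eq_matI)
    fix i j assume ij: "i < dim_row (?C * J * B)" "j < dim_col (?C * J * B)"
    have "(- J + (cnj z \<cdot>\<^sub>m (- (?C * J)) + z \<cdot>\<^sub>m (- (J * B)))) $$ (i,j) = 0" using col ij B by simp
    thus "(mat_adjoint A * J * A) $$ (i,j) = (?C * J * B) $$ (i,j)"
      unfolding adjA unfolding hA using ij B J C by (simp add: malg algebra_simps cz cz2 cz3 neg_eq_iff_add_eq_0)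
  qed (insert B J C, auto simp: hA)
qed



lemma reg_negadj:
  fixes R T :: "complex mat"
  assumes R: "R \<in> carrier_mat r r" and T: "T \<in> carrier_mat r r" and reg: "regular_pair R T"
  shows "regular_pair (- mat_adjoint R) (mat_adjoint T)"
proof -
  from reg obtain w0 where d: "det (R - w0 \<cdot>\<^sub>m T) \<noteq> 0" unfolding regular_pair_def by auto
  have e: "- mat_adjoint R - (- cnj w0) \<cdot>\<^sub>m mat_adjoint T = (-1) \<cdot>\<^sub>m mat_adjoint (R - w0 \<cdot>\<^sub>m T)"
    by (rule eq_matI, insert R T, auto)
  have "det ((-1) \<cdot>\<^sub>m mat_adjoint (R - w0 \<cdot>\<^sub>m T)) \<noteq> 0"
  proof -
    have RT: "R - w0 \<cdot>\<^sub>m T \<in> carrier_mat r r" using R T by auto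
    show ?thesis using d adj_det[OF RT] by simp
  qed
  hence "det (- mat_adjoint R - (- cnj w0) \<cdot>\<^sub>m mat_adjoint T) \<noteq> 0" unfolding e .
  thus ?thesis unfolding regular_pair_def by blast
qed

lemma inj_sucnat: "inj (\<lambda>m::nat. (of_nat (Suc m) :: complex))"
  by (rule injI) simp

lemma reg_adjswap:
  fixes R T :: "complex mat"
  assumes R: "R \<in> carrier_mat r r" and T: "T \<in> carrier_mat r r" and reg: "regular_pair R T"
  shows "regular_pair (mat_adjoint T) (mat_adjoint R)"
proof -
  have fin: "finite {z. det (R - z \<cdot>\<^sub>m T) = 0}" by (rule pencil_roots_finite[OF R T reg])
  obtain m where "(of_nat (Suc m) :: complex) \<notin> {z. det (R - z \<cdot>\<^sub>m T) = 0}"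
    using avoid_finite[OF fin inj_sucnat] by auto
  hence "det (R - (of_nat (Suc m) :: complex) \<cdot>\<^sub>m T) \<noteq> 0" by simp
  moreover have "(of_nat (Suc m) :: complex) \<noteq> 0" by (simp only: of_nat_eq_0_iff)
  ultimately obtain w0 :: complex where d: "det (R - w0 \<cdot>\<^sub>m T) \<noteq> 0" and w0: "w0 \<noteq> 0" by blast
  have e: "mat_adjoint T - cnj (1 / w0) \<cdot>\<^sub>m mat_adjoint R = mat_adjoint ((- 1 / w0) \<cdot>\<^sub>m (R - w0 \<cdot>\<^sub>m T))"
  proof (rule eq_matI)
    fix i j assume "i < dim_row (mat_adjoint ((- 1 / w0) \<cdot>\<^sub>m (R - w0 \<cdot>\<^sub>m T)))"
      "j < dim_col (mat_adjoint ((- 1 / w0) \<cdot>\<^sub>m (R - w0 \<cdot>\<^sub>m T)))"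
    hence ij: "i < r" "j < r" using R T by auto
    have "cnj (T $$ (j,i)) - cnj (1/w0) * cnj (R $$ (j,i)) = cnj ((- 1 / w0) * (R $$ (j,i) - w0 * T $$ (j,i)))"
      using w0 by (simp add: field_simps)
    thus "(mat_adjoint T - cnj (1 / w0) \<cdot>\<^sub>m mat_adjoint R) $$ (i,j) = mat_adjoint ((- 1 / w0) \<cdot>\<^sub>m (R - w0 \<cdot>\<^sub>m T)) $$ (i,j)"
      using ij R T by simp
  qed (insert R T, auto)
  have "det (mat_adjoint ((- 1 / w0) \<cdot>\<^sub>m (R - w0 \<cdot>\<^sub>m T))) \<noteq> 0"
    using d R T w0 by (subst adj_det[of _ r]) auto
  hence "det (mat_adjoint T - cnj (1 / w0) \<cdot>\<^sub>m mat_adjoint R) \<noteq> 0" unfolding e .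
  thus ?thesis unfolding regular_pair_def by blast
qed

lemma normalize:
  fixes M L :: "complex mat"
  assumes M: "M \<in> carrier_mat k k" and L: "L \<in> carrier_mat k k" and d: "det (M - z \<cdot>\<^sub>m L) \<noteq> 0"
  obtains Ni where "Ni \<in> carrier_mat k k" "Ni * M = 1\<^sub>m k + z \<cdot>\<^sub>m (Ni * L)"
proof -
  have N: "M - z \<cdot>\<^sub>m L \<in> carrier_mat k k" using M L by auto
  obtain Ni where Ni: "Ni \<in> carrier_mat k k" and NiN: "Ni * (M - z \<cdot>\<^sub>m L) = 1\<^sub>m k"
    using inv_ex[OF N d] by auto
  have e: "M = (M - z \<cdot>\<^sub>m L) + z \<cdot>\<^sub>m L" by (rule eq_matI, insert M L, auto)
  have e2: "Ni * ((M - z \<cdot>\<^sub>m L) + z \<cdot>\<^sub>m L) = Ni * (M - z \<cdot>\<^sub>m L) + Ni * (z \<cdot>\<^sub>m L)"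
    by (rule mdist_plus_r, insert Ni M L, auto)
  have e3: "Ni * (z \<cdot>\<^sub>m L) = z \<cdot>\<^sub>m (Ni * L)" by (rule msmult_r, insert Ni L, auto)
  have "Ni * M = Ni * ((M - z \<cdot>\<^sub>m L) + z \<cdot>\<^sub>m L)" using arg_cong[OF e, of "\<lambda>X. Ni * X"] .
  also have "\<dots> = Ni * (M - z \<cdot>\<^sub>m L) + z \<cdot>\<^sub>m (Ni * L)" unfolding e2 e3 ..
  finally have "Ni * M = Ni * (M - z \<cdot>\<^sub>m L) + z \<cdot>\<^sub>m (Ni * L)" .
  thus ?thesis using that Ni NiN by auto
qed



lemma adj_transfer:
  fixes A U S R :: "complex mat"
  assumes A: "A \<in> carrier_mat k k" and U: "U \<in> carrier_mat k r" and S: "S \<in> carrier_mat r r"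
    and R: "R \<in> carrier_mat r r" and a: "A * U * S = U * R" and W: "W \<in> carrier_mat k c"
  shows "mat_adjoint R * (mat_adjoint U * W) = mat_adjoint S * (mat_adjoint U * (mat_adjoint A * W))"
proof -
  have "mat_adjoint (U * R) = mat_adjoint (A * U * S)" unfolding a ..
  moreover have "mat_adjoint (U * R) = mat_adjoint R * mat_adjoint U" by (rule adj_mult[OF U R])
  moreover have AU: "A * U \<in> carrier_mat k r" using A U by auto
  moreover have "mat_adjoint (A * U * S) = mat_adjoint S * mat_adjoint (A * U)" by (rule adj_mult[OF AU S])
  moreover have "mat_adjoint (A * U) = mat_adjoint U * mat_adjoint A" by (rule adj_mult[OF A U])
  ultimately have "mat_adjoint R * mat_adjoint U = mat_adjoint S * (mat_adjoint U * mat_adjoint A)" by simp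
  hence "mat_adjoint R * mat_adjoint U * W = mat_adjoint S * (mat_adjoint U * mat_adjoint A) * W" by simp
  thus ?thesis using A U S R W by (simp add: massoc)
qed

lemma right_assoc3: "dim_col A = dim_row U \<Longrightarrow> dim_col U = dim_row S \<Longrightarrow> A * U * S = U * T \<Longrightarrow> A * (U * S) = U * T"
  by (simp add: massoc)

lemma neg_from_sum: fixes X Y :: "complex mat"
  assumes "X \<in> carrier_mat a b" "Y \<in> carrier_mat a b" "X + Y = 0\<^sub>m a b"
  shows "- X = Y"
proof (rule eq_matI)
  fix i j assume ij: "i < dim_row Y" "j < dim_col Y"
  have "(X + Y) $$ (i,j) = 0" using arg_cong[OF assms(3), of "\<lambda>M. M $$ (i,j)"] assms ij by simp
  thus "(- X) $$ (i,j) = Y $$ (i,j)" using assms(1,2) ij by (simp add: neg_eq_iff_add_eq_0)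
qed (insert assms, auto)

lemma ham_final:
  fixes A B J U1 U2 R1 T1 R2 T2 S1 S2 :: "complex mat"
  assumes A: "A \<in> carrier_mat k k" and B: "B \<in> carrier_mat k k" and J: "J \<in> carrier_mat k k"
    and U1: "U1 \<in> carrier_mat k r1" and U2: "U2 \<in> carrier_mat k r2"
    and R1: "R1 \<in> carrier_mat r1 r1" and T1: "T1 \<in> carrier_mat r1 r1" and S1: "S1 \<in> carrier_mat r1 r1"
    and R2: "R2 \<in> carrier_mat r2 r2" and T2: "T2 \<in> carrier_mat r2 r2" and S2: "S2 \<in> carrier_mat r2 r2"
    and a1: "A * U1 * S1 = U1 * R1" and b1: "B * U1 * S1 = U1 * T1"
    and a2: "A * U2 * S2 = U2 * R2" and b2: "B * U2 * S2 = U2 * T2"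
    and K: "mat_adjoint A * J * B + mat_adjoint B * J * A = 0\<^sub>m k k"
  shows "(- mat_adjoint R2) * (mat_adjoint U2 * J * U1) * T1 = mat_adjoint T2 * (mat_adjoint U2 * J * U1) * R1"
proof -
  let ?a = "mat_adjoint"
  have a1': "A * (U1 * S1) = U1 * R1" using right_assoc3[OF _ _ a1] A U1 S1 by auto
  have b1': "B * (U1 * S1) = U1 * T1" using right_assoc3[OF _ _ b1] B U1 S1 by auto
  have t1: "?a R2 * (?a U2 * (J * (U1 * T1))) = ?a S2 * (?a U2 * (?a A * (J * (B * (U1 * S1)))))"
    unfolding b1' by (rule adj_transfer[OF A U2 S2 R2 a2], insert J U1 T1, auto)
  have t2: "?a T2 * (?a U2 * (J * (U1 * R1))) = ?a S2 * (?a U2 * (?a B * (J * (A * (U1 * S1)))))"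
    unfolding a1' by (rule adj_transfer[OF B U2 S2 T2 b2], insert J U1 R1, auto)
  have "?a S2 * (?a U2 * ((?a A * J * B + ?a B * J * A) * (U1 * S1))) = 0\<^sub>m r2 r1"
    unfolding K using U1 U2 S1 S2 by simp
  hence sum: "?a S2 * (?a U2 * (?a A * (J * (B * (U1 * S1))))) + ?a S2 * (?a U2 * (?a B * (J * (A * (U1 * S1))))) = 0\<^sub>m r2 r1"
    using A B J U1 U2 S1 S2 by (simp add: malg)
  have lhs: "(- ?a R2) * (?a U2 * J * U1) * T1 = - (?a R2 * (?a U2 * (J * (U1 * T1))))"
    using R2 U2 J U1 T1 by (simp add: massoc)
  have rhs: "?a T2 * (?a U2 * J * U1) * R1 = ?a T2 * (?a U2 * (J * (U1 * R1)))"
    using T2 U2 J U1 R1 by (simp add: massoc)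
  show ?thesis unfolding lhs rhs t1 t2
    by (rule neg_from_sum[OF _ _ sum], insert A B J U1 U2 S1 S2, auto)
qed

lemma symp_final:
  fixes A B J U1 U2 R1 T1 R2 T2 S1 S2 :: "complex mat"
  assumes A: "A \<in> carrier_mat k k" and B: "B \<in> carrier_mat k k" and J: "J \<in> carrier_mat k k"
    and U1: "U1 \<in> carrier_mat k r1" and U2: "U2 \<in> carrier_mat k r2"
    and R1: "R1 \<in> carrier_mat r1 r1" and T1: "T1 \<in> carrier_mat r1 r1" and S1: "S1 \<in> carrier_mat r1 r1"
    and R2: "R2 \<in> carrier_mat r2 r2" and T2: "T2 \<in> carrier_mat r2 r2" and S2: "S2 \<in> carrier_mat r2 r2"
    and a1: "A * U1 * S1 = U1 * R1" and b1: "B * U1 * S1 = U1 * T1"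
    and a2: "A * U2 * S2 = U2 * R2" and b2: "B * U2 * S2 = U2 * T2"
    and K: "mat_adjoint A * J * A = mat_adjoint B * J * B"
  shows "mat_adjoint T2 * (mat_adjoint U2 * J * U1) * T1 = mat_adjoint R2 * (mat_adjoint U2 * J * U1) * R1"
proof -
  let ?a = "mat_adjoint"
  have a1': "A * (U1 * S1) = U1 * R1" using right_assoc3[OF _ _ a1] A U1 S1 by auto
  have b1': "B * (U1 * S1) = U1 * T1" using right_assoc3[OF _ _ b1] B U1 S1 by auto
  have t1: "?a R2 * (?a U2 * (J * (U1 * R1))) = ?a S2 * (?a U2 * (?a A * (J * (A * (U1 * S1)))))"
    unfolding a1' by (rule adj_transfer[OF A U2 S2 R2 a2], insert J U1 R1, auto)
  have t2: "?a T2 * (?a U2 * (J * (U1 * T1))) = ?a S2 * (?a U2 * (?a B * (J * (B * (U1 * S1)))))"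
    unfolding b1' by (rule adj_transfer[OF B U2 S2 T2 b2], insert J U1 T1, auto)
  have K': "?a A * (J * (A * (U1 * S1))) = ?a B * (J * (B * (U1 * S1)))"
  proof -
    have "?a A * J * A * (U1 * S1) = ?a B * J * B * (U1 * S1)" unfolding K ..
    thus ?thesis using A B J U1 S1 by (simp add: massoc)
  qed
  have lhs: "?a T2 * (?a U2 * J * U1) * T1 = ?a T2 * (?a U2 * (J * (U1 * T1)))"
    using T2 U2 J U1 T1 by (simp add: massoc)
  have rhs: "?a R2 * (?a U2 * J * U1) * R1 = ?a R2 * (?a U2 * (J * (U1 * R1)))"
    using R2 U2 J U1 R1 by (simp add: massoc)
  show ?thesis unfolding lhs rhs t1 t2 K' ..
qed



lemma congr_transfer:
  fixes Ni M L J :: "complex mat"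
  assumes Ni: "Ni \<in> carrier_mat k k" and M: "M \<in> carrier_mat k k" and L: "L \<in> carrier_mat k k"
    and J: "J \<in> carrier_mat k k"
  shows "(Ni * M) * J * mat_adjoint (Ni * L) = Ni * (M * J * mat_adjoint L) * mat_adjoint Ni"
  using Ni M L J by (simp add: adj_mult[OF Ni L] massoc)

lemma uv_transfer:
  fixes Ni M L U T R :: "complex mat"
  assumes Ni: "Ni \<in> carrier_mat k k" and M: "M \<in> carrier_mat k k" and L: "L \<in> carrier_mat k k"
    and U: "U \<in> carrier_mat k r" and T: "T \<in> carrier_mat r r" and R: "R \<in> carrier_mat r r"
    and d: "M * U * T = L * U * R"
  shows "(Ni * M) * U * T = (Ni * L) * U * R"
proof -
  have "(Ni * M) * U * T = Ni * (M * U * T)" using Ni M U T by (simp add: massoc)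
  also have "\<dots> = Ni * (L * U * R)" unfolding d ..
  also have "\<dots> = (Ni * L) * U * R" using Ni L U R by (simp add: massoc)
  finally show ?thesis .
qed

theorem theorem2p2:
  fixes n r1 r2 :: nat
    and M L U1 U2 R1 T1 R2 T2 :: "complex mat"
  assumes dimML: "M \<in> carrier_mat (2*n) (2*n)" "L \<in> carrier_mat (2*n) (2*n)"
    and reg: "regular_pair M L"
    and RT1: "R1 \<in> carrier_mat r1 r1" "T1 \<in> carrier_mat r1 r1" "regular_pair R1 T1"
    and RT2: "R2 \<in> carrier_mat r2 r2" "T2 \<in> carrier_mat r2 r2" "regular_pair R2 T2"
    and U1: "U1 \<in> carrier_mat (2*n) r1" "full_column_rank U1"
    and U2: "U2 \<in> carrier_mat (2*n) r2" "full_column_rank U2"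
    and def1: "M * U1 * T1 = L * U1 * R1"
    and def2: "M * U2 * T2 = L * U2 * R2"
  shows "(hamiltonian_pair n M L \<and>
           pair_spectrum R1 T1 \<inter> pair_spectrum (- mat_adjoint R2) (mat_adjoint T2) = {}
           \<longrightarrow> mat_adjoint U2 * Jmat n * U1 = 0\<^sub>m r2 r1)
       \<and> (symplectic_pair n M L \<and>
           pair_spectrum R1 T1 \<inter> pair_spectrum (mat_adjoint T2) (mat_adjoint R2) = {}
           \<longrightarrow> mat_adjoint U2 * Jmat n * U1 = 0\<^sub>m r2 r1)"
proof -
  let ?k = "2 * n"
  let ?J = "Jmat n"
  let ?X = "mat_adjoint U2 * ?J * U1"
  have M: "M \<in> carrier_mat ?k ?k" and L: "L \<in> carrier_mat ?k ?k" using dimML by auto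
  have J: "?J \<in> carrier_mat ?k ?k" by simp
  have R1: "R1 \<in> carrier_mat r1 r1" and T1: "T1 \<in> carrier_mat r1 r1"
    and R2: "R2 \<in> carrier_mat r2 r2" and T2: "T2 \<in> carrier_mat r2 r2" using RT1 RT2 by auto
  have U1c: "U1 \<in> carrier_mat ?k r1" and U2c: "U2 \<in> carrier_mat ?k r2" using U1 U2 by auto
  have X: "?X \<in> carrier_mat r2 r1" using U1c U2c J by auto
  have fin: "finite {z. det (M - z \<cdot>\<^sub>m L) = 0}" by (rule pencil_roots_finite[OF M L reg])
  have S1: "R1 - z \<cdot>\<^sub>m T1 \<in> carrier_mat r1 r1" for z using R1 T1 by auto
  have S2: "R2 - z \<cdot>\<^sub>m T2 \<in> carrier_mat r2 r2" for z using R2 T2 by auto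
  show ?thesis
  proof (intro conjI impI; elim conjE)
    assume ham: "hamiltonian_pair n M L"
      and disj: "pair_spectrum R1 T1 \<inter> pair_spectrum (- mat_adjoint R2) (mat_adjoint T2) = {}"
    obtain m where "\<i> * of_nat m \<notin> {z. det (M - z \<cdot>\<^sub>m L) = 0}"
      using avoid_finite[OF fin inj_imag] by auto
    then obtain z where dz: "det (M - z \<cdot>\<^sub>m L) \<noteq> 0" and cz: "cnj z = - z" by fastforce
    obtain Ni where Ni: "Ni \<in> carrier_mat ?k ?k" and hA: "Ni * M = 1\<^sub>m ?k + z \<cdot>\<^sub>m (Ni * L)"
      using normalize[OF M L dz] by blast
    define A where "A = Ni * M"
    define B where "B = Ni * L"
    have A: "A \<in> carrier_mat ?k ?k" and B: "B \<in> carrier_mat ?k ?k" unfolding A_def B_def using Ni M L by auto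
    have hA': "A = 1\<^sub>m ?k + z \<cdot>\<^sub>m B" using hA unfolding A_def B_def .
    have hAB: "A * ?J * mat_adjoint B = - (B * ?J * mat_adjoint A)"
    proof -
      have "A * ?J * mat_adjoint B = Ni * (M * ?J * mat_adjoint L) * mat_adjoint Ni"
        unfolding A_def B_def by (rule congr_transfer[OF Ni M L J])
      also have "\<dots> = Ni * (- (L * ?J * mat_adjoint M)) * mat_adjoint Ni"
        using ham unfolding hamiltonian_pair_def by simp
      also have "\<dots> = - (Ni * (L * ?J * mat_adjoint M) * mat_adjoint Ni)" using Ni L M J by simp
      also have "Ni * (L * ?J * mat_adjoint M) * mat_adjoint Ni = B * ?J * mat_adjoint A"
        unfolding A_def B_def by (rule congr_transfer[OF Ni L M J, symmetric])
      finally show ?thesis .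
    qed
    have K: "mat_adjoint A * ?J * B + mat_adjoint B * ?J * A = 0\<^sub>m ?k ?k"
      by (rule ham_col[OF B J JJ hA' cz hAB])
    have e1: "A * U1 * T1 = B * U1 * R1" unfolding A_def B_def by (rule uv_transfer[OF Ni M L U1c T1 R1 def1])
    have e2: "A * U2 * T2 = B * U2 * R2" unfolding A_def B_def by (rule uv_transfer[OF Ni M L U2c T2 R2 def2])
    note u1 = urel[OF A B U1c T1 R1 hA' e1]
    note u2 = urel[OF A B U2c T2 R2 hA' e2]
    have eq: "(- mat_adjoint R2) * ?X * T1 = mat_adjoint T2 * ?X * R1"
      by (rule ham_final[OF A B J U1c U2c R1 T1 S1 R2 T2 S2 u1(2) u1(1) u2(2) u2(1) K])
    show "?X = 0\<^sub>m r2 r1"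
      by (rule gsylvester[OF _ _ R1 T1 X reg_negadj[OF R2 T2 RT2(3)] RT1(3) eq disj], insert R2 T2, auto)
  next
    assume symp: "symplectic_pair n M L"
      and disj: "pair_spectrum R1 T1 \<inter> pair_spectrum (mat_adjoint T2) (mat_adjoint R2) = {}"
    obtain m where "ucirc m \<notin> {z. det (M - z \<cdot>\<^sub>m L) = 0}"
      using avoid_finite[OF fin inj_ucirc] by auto
    then obtain z where dz: "det (M - z \<cdot>\<^sub>m L) \<noteq> 0" and cz: "cnj z * z = 1" using ucirc_norm by fastforce
    obtain Ni where Ni: "Ni \<in> carrier_mat ?k ?k" and hA: "Ni * M = 1\<^sub>m ?k + z \<cdot>\<^sub>m (Ni * L)"
      using normalize[OF M L dz] by blast
    define A where "A = Ni * M"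
    define B where "B = Ni * L"
    have A: "A \<in> carrier_mat ?k ?k" and B: "B \<in> carrier_mat ?k ?k" unfolding A_def B_def using Ni M L by auto
    have hA': "A = 1\<^sub>m ?k + z \<cdot>\<^sub>m B" using hA unfolding A_def B_def .
    have hAA: "A * ?J * mat_adjoint A = B * ?J * mat_adjoint B"
    proof -
      have "A * ?J * mat_adjoint A = Ni * (M * ?J * mat_adjoint M) * mat_adjoint Ni"
        unfolding A_def B_def by (rule congr_transfer[OF Ni M M J])
      also have "\<dots> = Ni * (L * ?J * mat_adjoint L) * mat_adjoint Ni"
        using symp unfolding symplectic_pair_def by simp
      also have "\<dots> = B * ?J * mat_adjoint B"
        unfolding A_def B_def by (rule congr_transfer[OF Ni L L J, symmetric])
      finally show ?thesis .
    qed
    have K: "mat_adjoint A * ?J * A = mat_adjoint B * ?J * B"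
      by (rule symp_col[OF B J JJ hA' cz hAA])
    have e1: "A * U1 * T1 = B * U1 * R1" unfolding A_def B_def by (rule uv_transfer[OF Ni M L U1c T1 R1 def1])
    have e2: "A * U2 * T2 = B * U2 * R2" unfolding A_def B_def by (rule uv_transfer[OF Ni M L U2c T2 R2 def2])
    note u1 = urel[OF A B U1c T1 R1 hA' e1]
    note u2 = urel[OF A B U2c T2 R2 hA' e2]
    have eq: "mat_adjoint T2 * ?X * T1 = mat_adjoint R2 * ?X * R1"
      by (rule symp_final[OF A B J U1c U2c R1 T1 S1 R2 T2 S2 u1(2) u1(1) u2(2) u2(1) K])
    show "?X = 0\<^sub>m r2 r1"
      by (rule gsylvester[OF _ _ R1 T1 X reg_adjswap[OF R2 T2 RT2(3)] RT1(3) eq disj], insert R2 T2, auto)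
  qed
qed


end
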